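(* Let $d,l,m\geq1$, fix arbitrary norms $\|\cdot\|$ on $H(d)$ and on $M_{lm}(\mathbb{R})$, and let $\mathcal{Q}=\{P_1,\dots,P_l\}$ be a measurement scheme of POVMs with outcome set $\{1,\dots,m\}$ which determines any pure state among all states. Then there is a constant $C_{\mathcal{Q}}>0$ such that for every $\epsilon>0$, every pure state $\sigma$ and every $f\in M_{lm}(\mathbb{R})$ with $\|f\|\leq\epsilon$, setting $b=M_{\mathcal{Q}}(\sigma)+f$, any minimizer $Y^*$ of the semidefinite program $$\text{minimize } \mathrm{tr}(Y)\quad\text{subject to } Y\in H(d),\ Y\geq0,\ \|M_{\mathcal{Q}}(Y)-b\|\leq\epsilon$$ satisfies $\|Y^*-\sigma\|\leq C_{\mathcal{Q}}\,\epsilon$.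
   Context: $H(d)$ is the real vector space of $d\times d$ complex Hermitian matrices and $M_{lm}(\mathbb{R})$ the real $l\times m$ matrices. A POVM with outcome set $\{1,\dots,m\}$ is a map $j\mapsto P(j)\in H(d)$ with $P(j)\geq0$ and $\sum_j P(j)=\mathbb{1}$. The scheme induces $M_{\mathcal{Q}}:H(d)\to M_{lm}(\mathbb{R})$, $M_{\mathcal{Q}}(X)_{i,j}=\mathrm{tr}(XP_i(j))$. A state is a positive semidefinite trace-one matrix; a pure state is a rank-one state $|\psi\rangle\langle\psi|$. $\mathcal{Q}$ determines any pure state among all states if for every pure state $\sigma$ and every state $\varrho$, $M_{\mathcal{Q}}(\sigma)=M_{\mathcal{Q}}(\varrho)$ implies $\varrho=\sigma$. *)

theory Defs
  imports "HOL-Analysis.Analysis"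
begin

text \<open>d x d complex matrices are represented as complex ^ 'd ^ 'd, with 'd a finite
index type of cardinality d.\<close>

definition hermitian :: "complex ^ 'd::finite ^ 'd \<Rightarrow> bool" where
  "hermitian X \<longleftrightarrow> (\<forall>i j. X $ i $ j = cnj (X $ j $ i))"

definition psd :: "complex ^ 'd::finite ^ 'd \<Rightarrow> bool" where
  "psd X \<longleftrightarrow> hermitian X \<and>
     (\<forall>v :: complex ^ 'd. 0 \<le> Re (\<Sum>i\<in>UNIV. \<Sum>j\<in>UNIV. cnj (v $ i) * X $ i $ j * v $ j))"

definition ctrace :: "complex ^ 'd ^ 'd \<Rightarrow> complex" where
  "ctrace X = (\<Sum>i\<in>UNIV. X $ i $ i)"

definition is_state :: "complex ^ 'd::finite ^ 'd \<Rightarrow> bool" where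
  "is_state X \<longleftrightarrow> psd X \<and> ctrace X = 1"

definition pure_state :: "complex ^ 'd::finite ^ 'd \<Rightarrow> bool" where
  "pure_state X \<longleftrightarrow> (\<exists>\<psi> :: complex ^ 'd. (\<Sum>i\<in>UNIV. (cmod (\<psi> $ i))\<^sup>2) = 1 \<and>
       X = (\<chi> i j. \<psi> $ i * cnj (\<psi> $ j)))"

definition is_norm_on :: "'a set \<Rightarrow> ('a::real_vector \<Rightarrow> real) \<Rightarrow> bool" where
  "is_norm_on S N \<longleftrightarrow>
     (\<forall>x\<in>S. 0 \<le> N x \<and> (N x = 0 \<longleftrightarrow> x = 0)) \<and>
     (\<forall>x\<in>S. \<forall>c::real. N (c *\<^sub>R x) = \<bar>c\<bar> * N x) \<and>
     (\<forall>x\<in>S. \<forall>y\<in>S. N (x + y) \<le> N x + N y)"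

definition povm :: "('m::finite \<Rightarrow> complex ^ 'd ^ 'd) \<Rightarrow> bool" where
  "povm P \<longleftrightarrow> (\<forall>j. psd (P j)) \<and> (\<Sum>j\<in>UNIV. P j) = mat 1"

definition meas_map :: "('l::finite \<Rightarrow> 'm::finite \<Rightarrow> complex ^ 'd ^ 'd) \<Rightarrow> complex ^ 'd ^ 'd \<Rightarrow> real ^ 'm ^ 'l" where
  "meas_map Q X = (\<chi> i j. Re (ctrace (X ** Q i j)))"

definition determines_pure :: "('l::finite \<Rightarrow> 'm::finite \<Rightarrow> complex ^ 'd ^ 'd) \<Rightarrow> bool" where
  "determines_pure Q \<longleftrightarrow> (\<forall>\<sigma> \<rho>. pure_state \<sigma> \<longrightarrow> is_state \<rho> \<longrightarrow>
       meas_map Q \<sigma> = meas_map Q \<rho> \<longrightarrow> \<rho> = \<sigma>)"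

definition sdp_feasible ::
  "('l::finite \<Rightarrow> 'm::finite \<Rightarrow> complex ^ 'd ^ 'd) \<Rightarrow> (real ^ 'm ^ 'l \<Rightarrow> real) \<Rightarrow> real ^ 'm ^ 'l \<Rightarrow> real
     \<Rightarrow> complex ^ 'd::finite ^ 'd \<Rightarrow> bool" where
  "sdp_feasible Q Nm b \<epsilon> Y \<longleftrightarrow> hermitian Y \<and> psd Y \<and> Nm (meas_map Q Y - b) \<le> \<epsilon>"

definition sdp_minimizer ::
  "('l::finite \<Rightarrow> 'm::finite \<Rightarrow> complex ^ 'd ^ 'd) \<Rightarrow> (real ^ 'm ^ 'l \<Rightarrow> real) \<Rightarrow> real ^ 'm ^ 'l \<Rightarrow> real
     \<Rightarrow> complex ^ 'd::finite ^ 'd \<Rightarrow> bool" where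
  "sdp_minimizer Q Nm b \<epsilon> Y \<longleftrightarrow> sdp_feasible Q Nm b \<epsilon> Y \<and>
     (\<forall>Z. sdp_feasible Q Nm b \<epsilon> Z \<longrightarrow> Re (ctrace Y) \<le> Re (ctrace Z))"

end

theory Submission
  imports Defs
begin


definition hip :: "complex ^ 'd::finite \<Rightarrow> complex ^ 'd \<Rightarrow> complex" where
  "hip u v = (\<Sum>i\<in>UNIV. cnj (u $ i) * v $ i)"

definition qf :: "complex ^ 'd::finite ^ 'd \<Rightarrow> complex ^ 'd \<Rightarrow> complex" where
  "qf X v = hip v (X *v v)"

definition outer :: "complex ^ 'd::finite \<Rightarrow> complex ^ 'd ^ 'd" where
  "outer w = (\<chi> i j. w $ i * cnj (w $ j))"

lemma hip_add_left: "hip (u + v) w = hip u w + hip v w"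
  by (simp add: hip_def sum.distrib ring_distribs)
lemma hip_add_right: "hip w (u + v) = hip w u + hip w v"
  by (simp add: hip_def sum.distrib ring_distribs)
lemma hip_diff_left: "hip (u - v) w = hip u w - hip v w"
  by (simp add: hip_def sum_subtractf ring_distribs)
lemma hip_diff_right: "hip w (u - v) = hip w u - hip w v"
  by (simp add: hip_def sum_subtractf ring_distribs)
lemma hip_smult_left: "hip (c *s u) w = cnj c * hip u w"
  by (simp add: hip_def sum_distrib_left mult.assoc)
lemma hip_smult_right: "hip w (c *s u) = c * hip w u"
  by (simp add: hip_def sum_distrib_left algebra_simps)
lemma scaleR_smult: "r *\<^sub>R (u::complex^'d) = of_real r *s u"
  by (simp add: vec_eq_iff) (simp add: scaleR_conv_of_real)
lemma hip_scaleR_left: "hip (r *\<^sub>R u) w = of_real r * hip u w"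
  by (simp add: scaleR_smult hip_smult_left)
lemma hip_scaleR_right: "hip w (r *\<^sub>R u) = of_real r * hip w u"
  by (simp add: scaleR_smult hip_smult_right)
lemma hip_cnj: "cnj (hip u v) = hip v u"
  by (simp add: hip_def mult.commute)
lemma hip_zero_left[simp]: "hip 0 v = 0" by (simp add: hip_def)
lemma hip_zero_right[simp]: "hip v 0 = 0" by (simp add: hip_def)

lemma hip_self: "hip v v = of_real ((norm v)\<^sup>2)"
proof -
  have "hip v v = (\<Sum>i\<in>UNIV. of_real ((cmod (v$i))\<^sup>2))"
    unfolding hip_def by (intro sum.cong refl) (metis complex_norm_square complex_cnj_mult mult.commute of_real_power)
  also have "\<dots> = of_real (\<Sum>i\<in>UNIV. (cmod (v$i))\<^sup>2)" by simp
  also have "(\<Sum>i\<in>UNIV. (cmod (v$i))\<^sup>2) = (norm v)\<^sup>2"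
    by (simp add: norm_vec_def L2_set_def sum_nonneg)
  finally show ?thesis .
qed

lemma herm_hip: assumes "hermitian X" shows "hip u (X *v v) = hip (X *v u) v"
proof -
  have "hip u (X *v v) = (\<Sum>i\<in>UNIV. \<Sum>j\<in>UNIV. cnj (u$i) * X$i$j * v$j)"
    by (simp add: hip_def matrix_vector_mult_def sum_distrib_left mult.assoc)
  also have "\<dots> = (\<Sum>j\<in>UNIV. \<Sum>i\<in>UNIV. cnj (u$i) * X$i$j * v$j)" by (rule sum.swap)
  also have "\<dots> = (\<Sum>j\<in>UNIV. \<Sum>i\<in>UNIV. cnj (X$j$i * u$i) * v$j)"
  proof (intro sum.cong refl)
    fix j i
    have "X$i$j = cnj (X$j$i)" using assms unfolding hermitian_def by blast
    then show "cnj (u$i) * X$i$j * v$j = cnj (X$j$i * u$i) * v$j" by simp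
  qed
  also have "\<dots> = hip (X *v u) v"
    by (simp add: hip_def matrix_vector_mult_def sum_distrib_right)
  finally show ?thesis .
qed

lemma psd_qf: "psd X \<longleftrightarrow> hermitian X \<and> (\<forall>v. 0 \<le> Re (qf X v))"
proof -
  have "\<And>v. (\<Sum>i\<in>UNIV. \<Sum>j\<in>UNIV. cnj (v $ i) * X $ i $ j * v $ j) = qf X v"
    by (simp add: qf_def hip_def matrix_vector_mult_def sum_distrib_left mult.assoc)
  then show ?thesis unfolding psd_def by simp
qed

lemma outer_mv: "outer w *v v = hip w v *s w"
  by (simp add: outer_def matrix_vector_mult_def hip_def vec_eq_iff sum_distrib_left algebra_simps)

lemma qf_outer: "qf (outer w) v = of_real ((cmod (hip w v))\<^sup>2)"
proof -
  have "qf (outer w) v = hip w v * cnj (hip w v)" by (simp add: qf_def outer_mv hip_smult_right hip_cnj)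
  then show ?thesis by (metis complex_norm_square)
qed



lemma mv_smult: "(X::complex^'d::finite^'d) *v (c *s v) = c *s (X *v v)"
  by (simp add: vec_eq_iff matrix_vector_mult_def sum_distrib_left algebra_simps)
lemma mv_scaleR: "(X::complex^'d::finite^'d) *v (r *\<^sub>R v) = r *\<^sub>R (X *v v)"
  by (simp add: scaleR_smult mv_smult)
lemma mv_scaleR_mat: "((r::real) *\<^sub>R (X::complex^'d::finite^'d)) *v v = r *\<^sub>R (X *v v)"
  by (simp add: vec_eq_iff matrix_vector_mult_def scaleR_sum_right)

lemma qf_add_vec: "qf X (u + v) = qf X u + qf X v + hip u (X *v v) + hip v (X *v u)"
  by (simp add: qf_def matrix_vector_right_distrib hip_add_left hip_add_right)
lemma qf_diff_vec: "qf X (u - v) = qf X u + qf X v - hip u (X *v v) - hip v (X *v u)"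
  by (simp add: qf_def matrix_vector_mult_diff_distrib hip_diff_left hip_diff_right)
lemma qf_smult: "qf X (c *s v) = cnj c * c * qf X v"
  by (simp add: qf_def mv_smult hip_smult_left hip_smult_right)
lemma qf_scaleR: "qf X (r *\<^sub>R v) = of_real (r\<^sup>2) * qf X v"
  by (simp add: qf_def mv_scaleR hip_scaleR_left hip_scaleR_right power2_eq_square)
lemma qf_add_mat: "qf (X + Y) v = qf X v + qf Y v"
  by (simp add: qf_def matrix_vector_mult_add_rdistrib hip_add_right)
lemma qf_diff_mat: "qf (X - Y) v = qf X v - qf Y v"
  by (simp add: qf_def matrix_vector_mult_diff_rdistrib hip_diff_right)
lemma qf_scaleR_mat: "qf ((r::real) *\<^sub>R X) v = of_real r * qf X v"
  by (simp add: qf_def mv_scaleR_mat hip_scaleR_right)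

lemma quad_aux:
  fixes a c :: real
  assumes "a \<ge> 0" "\<And>t. 0 \<le> 2 * t * c + t\<^sup>2 * a" "c \<ge> 0"
  shows "c = 0"
proof (rule ccontr)
  assume "c \<noteq> 0"
  then have c: "c > 0" using assms by simp
  define t where "t = - c / (a + 1)"
  have ne: "a + 1 \<noteq> 0" using assms(1) by linarith
  have tt: "t * (a+1) = -c" by (simp add: t_def ne)
  have "(a+1)\<^sup>2*(2*t*c+t\<^sup>2*a) = 2*c*(t*(a+1))*(a+1) + (t*(a+1))\<^sup>2*a"
    by (simp add: algebra_simps power2_eq_square)
  also have "\<dots> = - (c\<^sup>2 * (a + 2))" unfolding tt by (simp add: algebra_simps power2_eq_square)
  also have "\<dots> < 0" using c assms(1) by (simp add: add_nonneg_pos)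
  finally have "(a+1)\<^sup>2*(2*t*c+t\<^sup>2*a) < 0" .
  moreover have "0 \<le> (a+1)\<^sup>2*(2*t*c+t\<^sup>2*a)" using assms(2)[of t] by simp
  finally show False by simp
qed

lemma zero_form:
  assumes h: "hermitian B" and nn: "\<And>v. 0 \<le> Re (qf B v)" and z: "Re (qf B w) = 0"
  shows "B *v w = 0"
proof -
  define u where "u = B *v w"
  define a where "a = Re (qf B u)"
  define c where "c = Re (hip u u)"
  have "\<And>t. 0 \<le> 2 * t * c + t\<^sup>2 * a"
  proof -
    fix t :: real
    have e: "hip w (B *v (t *\<^sub>R u)) = cnj (hip (t *\<^sub>R u) (B *v w))"
      using herm_hip[OF h] hip_cnj by metis
    have "0 \<le> Re (qf B (w + t *\<^sub>R u))" by (rule nn)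
    also have "\<dots> = 2 * t * c + t\<^sup>2 * a"
      unfolding qf_add_vec e using z
      by (simp add: qf_scaleR hip_scaleR_left a_def c_def u_def)
    finally show "0 \<le> 2 * t * c + t\<^sup>2 * a" .
  qed
  moreover have "a \<ge> 0" using nn a_def by simp
  moreover have "c = (norm u)\<^sup>2" by (simp add: c_def hip_self)
  ultimately have "(norm u)\<^sup>2 = 0" using quad_aux by fastforce
  then show ?thesis by (simp add: u_def)
qed



lemma continuous_on_vec_nth'[continuous_intros]:
  fixes f :: "'a::topological_space \<Rightarrow> 'b::real_normed_vector ^ 'n::finite"
  shows "continuous_on S f \<Longrightarrow> continuous_on S (\<lambda>x. f x $ i)"
  by (rule bounded_linear.continuous_on[OF bounded_linear_vec_nth])

lemma cont_qf: "continuous_on S (\<lambda>v. Re (qf X v))"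
  unfolding qf_def hip_def matrix_vector_mult_def
  by (intro continuous_intros)

lemma meas_add: "meas_map Q (X + Y) = meas_map Q X + meas_map Q Y"
  by (simp add: meas_map_def ctrace_def matrix_matrix_mult_def vec_eq_iff sum.distrib ring_distribs)
lemma meas_diff: "meas_map Q (X - Y) = meas_map Q X - meas_map Q Y"
  by (simp add: meas_map_def ctrace_def matrix_matrix_mult_def vec_eq_iff sum_subtractf ring_distribs)
lemma cscale: "(r::real) *\<^sub>R (z::complex) = complex_of_real r * z"
  by (simp add: scaleR_conv_of_real)

lemma meas_scaleR: "meas_map Q ((r::real) *\<^sub>R X) = r *\<^sub>R meas_map Q X"
  by (simp add: meas_map_def ctrace_def matrix_matrix_mult_def vec_eq_iff sum_distrib_left
        cscale mult.assoc)
lemma meas_zero: "meas_map Q 0 = 0"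
  by (simp add: meas_map_def ctrace_def matrix_matrix_mult_def vec_eq_iff)

lemma ctrace_add: "ctrace (X + Y) = ctrace X + ctrace Y"
  by (simp add: ctrace_def sum.distrib)
lemma ctrace_diff: "ctrace (X - Y) = ctrace X - ctrace Y"
  by (simp add: ctrace_def sum_subtractf)
lemma ctrace_scaleR: "ctrace ((r::real) *\<^sub>R X) = of_real r * ctrace X"
  by (simp add: ctrace_def sum_distrib_left cscale)
lemma ctrace_zero[simp]: "ctrace 0 = 0"
  by (simp add: ctrace_def)

lemma ctrace_mult_sum: "finite S \<Longrightarrow> ctrace (X ** sum f S) = (\<Sum>j\<in>S. ctrace (X ** f j))"
proof (induction rule: finite_induct)
  case empty
  then show ?case by (simp add: matrix_matrix_mult_def ctrace_def)
next
  case (insert x F)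
  then show ?case by (simp add: matrix_add_ldistrib ctrace_add)
qed

lemma meas_trace:
  assumes "povm (Q i)"
  shows "(\<Sum>j\<in>UNIV. meas_map Q X $ i $ j) = Re (ctrace X)"
proof -
  have s: "(\<Sum>j\<in>UNIV. Q i j) = mat 1" using assms by (simp add: povm_def)
  have "(\<Sum>j\<in>UNIV. meas_map Q X $ i $ j) = Re (\<Sum>j\<in>UNIV. ctrace (X ** Q i j))"
    by (simp add: meas_map_def Re_sum)
  also have "\<dots> = Re (ctrace (X ** mat 1))"
    by (simp add: ctrace_mult_sum[symmetric] s)
  finally show ?thesis by simp
qed



lemma hermitianD: "hermitian X \<Longrightarrow> X$i$j = cnj (X$j$i)"
  unfolding hermitian_def by blast
lemma hermitianI: "(\<And>i j. X$i$j = cnj (X$j$i)) \<Longrightarrow> hermitian X"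
  unfolding hermitian_def by blast

lemma herm_add: "hermitian X \<Longrightarrow> hermitian Y \<Longrightarrow> hermitian (X + Y)"
proof (rule hermitianI)
  fix i j assume a: "hermitian X" "hermitian Y"
  show "(X + Y)$i$j = cnj ((X + Y)$j$i)" using hermitianD[OF a(1), of i j] hermitianD[OF a(2), of i j] by simp
qed
lemma herm_diff: "hermitian X \<Longrightarrow> hermitian Y \<Longrightarrow> hermitian (X - Y)"
proof (rule hermitianI)
  fix i j assume a: "hermitian X" "hermitian Y"
  show "(X - Y)$i$j = cnj ((X - Y)$j$i)" using hermitianD[OF a(1), of i j] hermitianD[OF a(2), of i j] by simp
qed
lemma herm_scaleR: "hermitian X \<Longrightarrow> hermitian ((r::real) *\<^sub>R X)"
proof (rule hermitianI)
  fix i j assume a: "hermitian X"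
  show "(r *\<^sub>R X)$i$j = cnj ((r *\<^sub>R X)$j$i)" using hermitianD[OF a, of i j] by (simp add: cscale)
qed
lemma herm_outer: "hermitian (outer w)"
  by (rule hermitianI) (simp add: outer_def)
lemma herm_mat1: "hermitian (mat 1 :: complex^'d::finite^'d)"
  by (rule hermitianI) (simp add: mat_def)
lemma herm_zero: "hermitian 0"
  by (rule hermitianI) simp

lemma herm_trace_real: assumes "hermitian X" shows "ctrace X = of_real (Re (ctrace X))"
proof -
  have "\<And>i. Im (X$i$i) = 0"
  proof -
    fix i have "X$i$i = cnj (X$i$i)" using assms unfolding hermitian_def by blast
    then show "Im (X$i$i) = 0" by (metis cnj.sel(2) equation_minus_iff neg_equal_zero)
  qed
  then have "Im (ctrace X) = 0" by (simp add: ctrace_def Im_sum)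
  then show ?thesis by (simp add: complex_eq_iff)
qed

lemma norm1_sum: "norm (w::complex^'d::finite) = 1 \<longleftrightarrow> (\<Sum>i\<in>UNIV. (cmod (w $ i))\<^sup>2) = 1"
proof -
  have "norm w = sqrt (\<Sum>i\<in>UNIV. (cmod (w $ i))\<^sup>2)" by (simp add: norm_vec_def L2_set_def)
  then show ?thesis by (metis real_sqrt_eq_1_iff)
qed

lemma pure_outer: "norm w = 1 \<Longrightarrow> pure_state (outer w)"
  unfolding pure_state_def outer_def using norm1_sum by blast

lemma pure_ex: "pure_state \<sigma> \<Longrightarrow> \<exists>w. norm w = 1 \<and> \<sigma> = outer w"
  unfolding pure_state_def outer_def using norm1_sum by blast

lemma ctrace_outer: "norm w = 1 \<Longrightarrow> ctrace (outer w) = 1"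
proof -
  assume "norm w = 1"
  have "ctrace (outer w) = cnj (hip w w)"
    by (simp add: ctrace_def outer_def hip_def mult.commute)
  also have "\<dots> = 1" using \<open>norm w = 1\<close> by (simp add: hip_self)
  finally show ?thesis .
qed

lemma psd_outer: "psd (outer w)"
  by (simp add: psd_qf herm_outer qf_outer)
lemma psd_add: "psd X \<Longrightarrow> psd Y \<Longrightarrow> psd (X + Y)"
  by (simp add: psd_qf herm_add qf_add_mat)
lemma psd_scaleR: "psd X \<Longrightarrow> r \<ge> 0 \<Longrightarrow> psd ((r::real) *\<^sub>R X)"
  by (simp add: psd_qf herm_scaleR qf_scaleR_mat)

lemma qf_mat1: "qf (mat 1) v = hip v v"
  by (simp add: qf_def)

lemma hip_mv_eig:
  assumes "hermitian X" "X *v w = of_real \<mu> *s w"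
  shows "hip w (X *v v) = of_real \<mu> * hip w v"
  using assms by (simp add: herm_hip hip_smult_left)

lemma orth_expand:
  assumes h: "hermitian X" and e: "X *v w = of_real \<mu> *s w" and o: "hip w v = 0"
  shows "qf X (\<alpha> *s v + \<beta> *s w) = cnj \<alpha> * \<alpha> * qf X v + cnj \<beta> * \<beta> * (of_real \<mu> * hip w w)"
proof -
  have o2: "hip v w = 0" using o hip_cnj by (metis complex_cnj_zero)
  have 1: "hip (\<alpha> *s v) (X *v (\<beta> *s w)) = 0"
    by (simp add: mv_smult e hip_smult_left hip_smult_right o2)
  have 2: "hip (\<beta> *s w) (X *v (\<alpha> *s v)) = 0"
    by (simp add: mv_smult hip_smult_left hip_smult_right hip_mv_eig[OF h e] o)
  have 3: "qf X w = of_real \<mu> * hip w w"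
    by (simp add: qf_def e hip_smult_right)
  show ?thesis unfolding qf_add_vec 1 2 by (simp add: qf_smult 3)
qed



lemma Re_ofr: "Re (complex_of_real r * z) = r * Re z" by simp
lemma cnj_mult_self: "cnj c * c = complex_of_real ((cmod c)\<^sup>2)"
  by (metis complex_norm_square mult.commute)

lemma sphere_ne: "sphere (0::complex^'d::finite) 1 \<noteq> {}"
proof -
  define v :: "complex^'d" where "v = axis undefined 1"
  have "v \<noteq> 0" by (simp add: v_def axis_def vec_eq_iff)
  then have "norm ((1/norm v) *\<^sub>R v) = 1" by simp
  then show ?thesis by fastforce
qed

lemma kernel_lemma:
  fixes Q :: "'l::finite \<Rightarrow> 'm::finite \<Rightarrow> complex ^ 'd::finite ^ 'd" and X :: "complex ^ 'd ^ 'd"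
  assumes povm: "\<forall>i. povm (Q i)" and det: "determines_pure Q"
    and h: "hermitian X"
    and K: "\<forall>u. hip \<psi> u = 0 \<longrightarrow> 0 \<le> Re (qf X u)"
    and m: "meas_map Q X = 0"
  shows "X = 0"
proof -
  obtain w where w: "w \<in> sphere 0 1" "\<forall>v \<in> sphere 0 1. Re (qf X w) \<le> Re (qf X v)"
    using continuous_attains_inf[OF compact_sphere sphere_ne cont_qf] by blast
  define \<mu> where "\<mu> = Re (qf X w)"
  have nw: "norm w = 1" using w by simp
  have ge: "\<mu> * (norm v)\<^sup>2 \<le> Re (qf X v)" for v
  proof (cases "v = 0")
    case True then show ?thesis by (simp add: qf_def)
  next
    case False
    define u where "u = (1/norm v) *\<^sub>R v"
    have "norm u = 1" using False by (simp add: u_def)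
    then have "\<mu> \<le> Re (qf X u)" using w \<mu>_def by simp
    also have "Re (qf X u) = Re (qf X v) / (norm v)\<^sup>2"
      by (simp add: u_def qf_scaleR Re_ofr power_divide)
    finally show ?thesis using False by (simp add: field_simps)
  qed
  have wB: "X *v w = of_real \<mu> *s w"
  proof -
    define B where "B = X - \<mu> *\<^sub>R mat 1"
    have hB: "hermitian B" by (simp add: B_def herm_diff herm_scaleR herm_mat1 h)
    have nnB: "0 \<le> Re (qf B v)" for v
      using ge[of v] by (simp add: B_def qf_diff_mat qf_scaleR_mat qf_mat1 hip_self)
    have zB: "Re (qf B w) = 0" by (simp add: B_def qf_diff_mat qf_scaleR_mat qf_mat1 hip_self nw \<mu>_def)
    have "B *v w = 0" by (rule zero_form[OF hB nnB zB])
    then show ?thesis by (simp add: B_def matrix_vector_mult_diff_rdistrib mv_scaleR_mat scaleR_smult)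
  qed
  have hww: "hip w w = 1" using nw by (simp add: hip_self)
  define lam where "lam = max 0 (-\<mu>)"
  have lam0: "lam \<ge> 0" by (simp add: lam_def)
  define A where "A = X + lam *\<^sub>R outer w"
  have hA: "hermitian A" by (simp add: A_def herm_add herm_scaleR herm_outer h)
  have psdA: "psd A"
  proof (cases "\<mu> \<ge> 0")
    case True
    then have "A = X" by (simp add: A_def lam_def)
    moreover have "0 \<le> Re (qf X v)" for v
      using ge[of v] True by (meson order_trans zero_le_mult_iff zero_le_power2)
    ultimately show ?thesis using h by (simp add: psd_qf)
  next
    case False
    then have lam: "lam = -\<mu>" by (simp add: lam_def)
    show "psd A" unfolding psd_qf
    proof (intro conjI allI hA)
      fix v
      define c where "c = hip w v"
      define v' where "v' = v - c *s w"
      have o: "hip w v' = 0" by (simp add: v'_def hip_diff_right hip_smult_right hww c_def)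
      have vdec: "v = 1 *s v' + c *s w" by (simp add: v'_def)
      have qv: "qf X v = qf X v' + cnj c * c * of_real \<mu>"
        using orth_expand[OF h wB o, of 1 c] vdec hww by simp
      have "0 \<le> Re (qf X v')"
      proof -
        define a where "a = hip \<psi> w"
        define b where "b = hip \<psi> v'"
        have a0: "a \<noteq> 0"
        proof
          assume "a = 0" then have "hip \<psi> w = 0" by (simp add: a_def)
          then have "0 \<le> Re (qf X w)" using K by blast
          then show False using False \<mu>_def by simp
        qed
        have "hip \<psi> (a *s v' + (-b) *s w) = 0"
          by (simp add: hip_add_right hip_smult_right a_def b_def hip_diff_right mult.commute)
        then have "0 \<le> Re (qf X (a *s v' + (-b) *s w))" using K by blast
        also have "qf X (a *s v' + (-b) *s w) = cnj a * a * qf X v' + cnj b * b * of_real \<mu>"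
          using orth_expand[OF h wB o, of a "-b"] hww by simp
        finally have "0 \<le> (cmod a)\<^sup>2 * Re (qf X v') + (cmod b)\<^sup>2 * \<mu>"
          by (simp only: cnj_mult_self Re_ofr plus_complex.sel of_real_mult[symmetric] mult.assoc Re_complex_of_real)
        moreover have "(cmod b)\<^sup>2 * \<mu> \<le> 0" using False by (simp add: mult_nonneg_nonpos)
        moreover have "(cmod a)\<^sup>2 > 0" using a0 by simp
        ultimately show ?thesis by (smt (verit) mult_pos_neg)
      qed
      moreover have "Re (qf A v) = Re (qf X v') + (cmod c)\<^sup>2 * \<mu> + lam * (cmod c)\<^sup>2"
        by (simp add: A_def qf_add_mat qf_scaleR_mat qf_outer qv cnj_mult_self c_def Re_ofr
              flip: of_real_mult)
      ultimately show "0 \<le> Re (qf A v)" using lam by simp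
    qed
  qed
  have trX: "ctrace X = 0"
  proof -
    have "Re (ctrace X) = (\<Sum>j\<in>UNIV. meas_map Q X $ undefined $ j)"
      using meas_trace povm by metis
    also have "\<dots> = 0" using m by simp
    finally show ?thesis using herm_trace_real[OF h] by simp
  qed
  have trA: "ctrace A = of_real lam"
    by (simp add: A_def ctrace_add ctrace_scaleR ctrace_outer nw trX)
  have mA: "meas_map Q A = lam *\<^sub>R meas_map Q (outer w)"
    by (simp add: A_def meas_add meas_scaleR m)
  define \<rho> where "\<rho> = (1/(lam+1)) *\<^sub>R (A + outer w)"
  have l1: "lam + 1 > 0" using lam0 by simp
  have st: "is_state \<rho>"
    unfolding is_state_def
  proof
    show "psd \<rho>" unfolding \<rho>_def using l1 by (intro psd_scaleR psd_add psdA psd_outer) simp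
    have "ctrace \<rho> = of_real (1/(lam+1)) * (of_real lam + 1)"
      by (simp add: \<rho>_def ctrace_scaleR ctrace_add trA ctrace_outer nw)
    also have "\<dots> = of_real ((1/(lam+1)) * (lam + 1))" by (metis of_real_1 of_real_add of_real_mult)
    also have "\<dots> = 1" using l1 by simp
    finally show "ctrace \<rho> = 1" .
  qed
  have "meas_map Q \<rho> = (1/(lam+1)) *\<^sub>R ((lam + 1) *\<^sub>R meas_map Q (outer w))"
    by (simp add: \<rho>_def meas_scaleR meas_add mA scaleR_add_left)
  also have "\<dots> = meas_map Q (outer w)" using l1 by simp
  finally have "\<rho> = outer w" using det pure_outer[OF nw] st unfolding determines_pure_def by metis
  then have "(lam+1) *\<^sub>R \<rho> = (lam+1) *\<^sub>R outer w" by simp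
  then have "A + outer w = (lam+1) *\<^sub>R outer w" using l1 by (simp add: \<rho>_def)
  then have "A = lam *\<^sub>R outer w" by (simp add: scaleR_add_left)
  then show "X = 0" by (simp add: A_def)
qed



lemma norm_zero_on: "is_norm_on S N \<Longrightarrow> 0 \<in> S \<Longrightarrow> N 0 = 0"
  unfolding is_norm_on_def by blast

lemma norm_sum_le:
  assumes n: "is_norm_on S N" and add: "\<And>x y. x \<in> S \<Longrightarrow> y \<in> S \<Longrightarrow> x + y \<in> S" and z: "0 \<in> S"
    and fin: "finite I"
  shows "(\<forall>i\<in>I. f i \<in> S) \<longrightarrow> sum f I \<in> S \<and> N (sum f I) \<le> (\<Sum>i\<in>I. N (f i))"
  using fin
proof (induction rule: finite_induct)
  case empty
  then show ?case using norm_zero_on[OF n z] z by simp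
next
  case (insert x F)
  show ?case
  proof
    assume a: "\<forall>i\<in>insert x F. f i \<in> S"
    then have IH: "sum f F \<in> S" "N (sum f F) \<le> (\<Sum>i\<in>F. N (f i))" using insert by auto
    have fx: "f x \<in> S" using a by simp
    have "N (f x + sum f F) \<le> N (f x) + N (sum f F)" using n fx IH(1) unfolding is_norm_on_def by blast
    then show "sum f (insert x F) \<in> S \<and> N (sum f (insert x F)) \<le> (\<Sum>i\<in>insert x F. N (f i))"
      using insert IH add fx by simp
  qed
qed

lemma norm_upper:
  fixes N :: "'a::euclidean_space \<Rightarrow> real"
  assumes n: "is_norm_on S N" and add: "\<And>x y. x \<in> S \<Longrightarrow> y \<in> S \<Longrightarrow> x + y \<in> S" and z: "0 \<in> S"
    and lg: "linear g" and gS: "\<And>z. g z \<in> S" and gid: "\<And>x. x \<in> S \<Longrightarrow> g x = x"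
  shows "\<exists>K\<ge>0. \<forall>x\<in>S. N x \<le> K * norm x"
proof (intro exI conjI ballI)
  define K where "K = (\<Sum>b\<in>Basis. N (g b))"
  have Nnn: "\<And>y. y \<in> S \<Longrightarrow> 0 \<le> N y" using n unfolding is_norm_on_def by blast
  show "0 \<le> K" unfolding K_def by (intro sum_nonneg Nnn gS)
  fix x assume xS: "x \<in> S"
  have "x = g x" using gid[OF xS] by simp
  also have "\<dots> = g (\<Sum>b\<in>Basis. (x \<bullet> b) *\<^sub>R b)" by (simp add: euclidean_representation)
  also have "\<dots> = (\<Sum>b\<in>Basis. g ((x \<bullet> b) *\<^sub>R b))" by (simp add: linear_sum[OF lg])
  finally have xe: "x = (\<Sum>b\<in>Basis. g ((x \<bullet> b) *\<^sub>R b))" .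
  have "N x \<le> (\<Sum>b\<in>Basis. N (g ((x \<bullet> b) *\<^sub>R b)))"
    using norm_sum_le[OF n add z, of Basis "\<lambda>b. g ((x \<bullet> b) *\<^sub>R b)"] gS xe by auto
  also have "\<dots> = (\<Sum>b\<in>Basis. \<bar>x \<bullet> b\<bar> * N (g b))"
    using n gS unfolding is_norm_on_def by (simp add: linear_scale[OF lg])
  also have "\<dots> \<le> (\<Sum>b\<in>Basis. norm x * N (g b))"
    by (intro sum_mono mult_right_mono Basis_le_norm Nnn gS)
  also have "\<dots> = K * norm x" by (simp add: K_def sum_distrib_left mult.commute)
  finally show "N x \<le> K * norm x" .
qed

definition hc :: "complex^'d::finite^'d \<Rightarrow> complex^'d^'d" where
  "hc Z = (\<chi> i j. (Z$i$j + cnj (Z$j$i)) / 2)"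

lemma linear_hc: "linear hc"
  by (rule linearI) (simp_all add: hc_def vec_eq_iff cscale field_simps)

lemma herm_hc: "hermitian (hc Z)"
  by (rule hermitianI) (simp add: hc_def add.commute)

lemma hc_id: "hermitian X \<Longrightarrow> hc X = X"
  by (simp add: hc_def vec_eq_iff) (metis complex_cnj_cnj hermitianD field_sum_of_halves)

lemma NH_upper:
  fixes NH :: "complex^'d::finite^'d \<Rightarrow> real"
  assumes "is_norm_on {X. hermitian X} NH"
  shows "\<exists>K\<ge>0. \<forall>X. hermitian X \<longrightarrow> NH X \<le> K * norm X"
  using norm_upper[OF assms, of hc] herm_add herm_zero linear_hc herm_hc hc_id by auto

lemma Nm_upper:
  fixes Nm :: "'a::euclidean_space \<Rightarrow> real"
  assumes "is_norm_on UNIV Nm"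
  shows "\<exists>K\<ge>0. \<forall>x. Nm x \<le> K * norm x"
  using norm_upper[OF assms, of id] linear_id by auto

lemma Nm_cont:
  fixes Nm :: "'a::euclidean_space \<Rightarrow> real"
  assumes n: "is_norm_on UNIV Nm"
  shows "continuous_on S Nm"
proof -
  obtain K where K: "K \<ge> 0" "\<And>x. Nm x \<le> K * norm x" using Nm_upper[OF n] by blast
  have tri: "Nm (x + y) \<le> Nm x + Nm y" for x y using n unfolding is_norm_on_def by blast
  have sym: "Nm (y - x) = Nm (x - y)" for x y
  proof -
    have "Nm ((-1) *\<^sub>R (x - y)) = \<bar>-1\<bar> * Nm (x - y)" using n unfolding is_norm_on_def by blast
    then show ?thesis by simp
  qed
  have lip: "\<bar>Nm x - Nm y\<bar> \<le> K * norm (x - y)" for x y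
  proof -
    have "Nm x \<le> Nm y + Nm (x - y)" using tri[of y "x - y"] by simp
    moreover have "Nm y \<le> Nm x + Nm (x - y)" using tri[of x "y - x"] sym[of x y] by simp
    moreover have "Nm (x - y) \<le> K * norm (x - y)" by (rule K(2))
    ultimately show ?thesis by linarith
  qed
  show ?thesis unfolding continuous_on_iff
  proof (intro ballI allI impI)
    fix x e assume "x \<in> S" "(e::real) > 0"
    show "\<exists>d>0. \<forall>x'\<in>S. dist x' x < d \<longrightarrow> dist (Nm x') (Nm x) < e"
    proof (intro exI[of _ "e / (K+1)"] conjI ballI impI)
      show "e / (K+1) > 0" using \<open>e > 0\<close> K(1) by simp
      fix x' assume "x' \<in> S" "dist x' x < e / (K+1)"
      then have d: "norm (x' - x) * (K+1) < e" using K(1) by (simp add: dist_norm field_simps)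
      have "dist (Nm x') (Nm x) \<le> K * norm (x' - x)" using lip[of x' x] by (simp add: dist_real_def)
      also have "\<dots> \<le> norm (x' - x) * (K+1)" by (simp add: algebra_simps)
      finally show "dist (Nm x') (Nm x) < e" using d by linarith
    qed
  qed
qed



definition KC :: "complex^'d::finite \<Rightarrow> complex^'d^'d \<Rightarrow> bool" where
  "KC \<psi> X \<longleftrightarrow> (\<forall>u. 0 \<le> Re (qf X (u - hip \<psi> u *s \<psi>)))"

lemma continuous_on_smult'[continuous_intros]:
  fixes f :: "'a::topological_space \<Rightarrow> complex" and g :: "'a \<Rightarrow> complex^'n::finite"
  shows "continuous_on S f \<Longrightarrow> continuous_on S g \<Longrightarrow> continuous_on S (\<lambda>x. f x *s g x)"
  unfolding vector_scalar_mult_def by (intro continuous_intros)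

lemma cont_meas: "continuous_on S (meas_map Q)"
  unfolding meas_map_def ctrace_def matrix_matrix_mult_def
  by (simp only: vec_lambda_beta) (intro continuous_intros)

lemma closed_T: "closed {p :: (complex^'d::finite) \<times> (complex^'d^'d). hermitian (snd p) \<and> KC (fst p) (snd p)}"
proof -
  have 1: "closed {p :: (complex^'d) \<times> (complex^'d^'d). \<forall>i j. snd p $ i $ j = cnj (snd p $ j $ i)}"
    by (intro closed_Collect_all closed_Collect_eq continuous_intros)
  have 2: "closed {p :: (complex^'d) \<times> (complex^'d^'d). \<forall>u. 0 \<le> Re (qf (snd p) (u - hip (fst p) u *s fst p))}"
    unfolding qf_def hip_def matrix_vector_mult_def
    by (intro closed_Collect_all closed_Collect_le continuous_intros)
  have "{p :: (complex^'d) \<times> (complex^'d^'d). hermitian (snd p) \<and> KC (fst p) (snd p)} =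
     {p. \<forall>i j. snd p $ i $ j = cnj (snd p $ j $ i)} \<inter> {p. \<forall>u. 0 \<le> Re (qf (snd p) (u - hip (fst p) u *s fst p))}"
    unfolding hermitian_def KC_def by blast
  then show ?thesis using closed_Int[OF 1 2] by simp
qed

lemma KC_kernel: "KC \<psi> X \<Longrightarrow> \<forall>u. hip \<psi> u = 0 \<longrightarrow> 0 \<le> Re (qf X u)"
  unfolding KC_def by (metis diff_zero vector_smult_lzero)

lemma KC_scale: "KC \<psi> X \<Longrightarrow> r \<ge> 0 \<Longrightarrow> KC \<psi> ((r::real) *\<^sub>R X)"
  unfolding KC_def by (simp add: qf_scaleR_mat)

lemma stability_bound:
  fixes Q :: "'l::finite \<Rightarrow> 'm::finite \<Rightarrow> complex ^ 'd::finite ^ 'd"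
    and Nm :: "real ^ 'm ^ 'l \<Rightarrow> real"
  assumes n: "is_norm_on UNIV Nm" and povm: "\<forall>i. povm (Q i)" and det: "determines_pure Q"
  shows "\<exists>c>0. \<forall>\<psi> X. norm \<psi> = 1 \<longrightarrow> hermitian X \<longrightarrow> KC \<psi> X \<longrightarrow> c * norm X \<le> Nm (meas_map Q X)"
proof -
  define T where "T = {p :: (complex^'d) \<times> (complex^'d^'d). hermitian (snd p) \<and> KC (fst p) (snd p)}"
  define SS where "SS = (sphere (0::complex^'d) 1 \<times> sphere (0::complex^'d^'d) 1) \<inter> T"
  have cSS: "compact SS" unfolding SS_def T_def
    by (intro compact_Int_closed compact_Times compact_sphere closed_T)
  define F where "F = (\<lambda>p :: (complex^'d) \<times> (complex^'d^'d). Nm (meas_map Q (snd p)))"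
  have cm: "continuous_on SS (\<lambda>p :: (complex^'d) \<times> (complex^'d^'d). meas_map Q (snd p))"
    unfolding meas_map_def ctrace_def matrix_matrix_mult_def
    by (simp only: vec_lambda_beta) (intro continuous_intros)
  have cF: "continuous_on SS F" unfolding F_def
    using continuous_on_compose2[OF Nm_cont[OF n, of UNIV] cm] by simp
  have Nm0: "Nm 0 = 0" using norm_zero_on[OF n] by simp
  have Nmz: "Nm x = 0 \<longleftrightarrow> x = 0" for x using n unfolding is_norm_on_def by blast
  have Nmh: "Nm (r *\<^sub>R x) = \<bar>r\<bar> * Nm x" for r x using n unfolding is_norm_on_def by blast
  obtain c where c: "c > 0" "\<forall>p\<in>SS. c \<le> F p"
  proof (cases "SS = {}")
    case True then show ?thesis using that[of 1] by simp
  next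
    case False
    obtain p0 where p0: "p0 \<in> SS" "\<forall>p\<in>SS. F p0 \<le> F p"
      using continuous_attains_inf[OF cSS False cF] by blast
    have "F p0 \<noteq> 0"
    proof
      assume "F p0 = 0"
      then have "meas_map Q (snd p0) = 0" using Nmz F_def by simp
      moreover have "hermitian (snd p0)" "KC (fst p0) (snd p0)" using p0 by (auto simp: SS_def T_def)
      ultimately have "snd p0 = 0" using kernel_lemma[OF povm det] KC_kernel by blast
      moreover have "norm (snd p0) = 1" using p0(1) unfolding SS_def by (auto simp: mem_Times_iff)
      ultimately show False by simp
    qed
    moreover have "F p0 \<ge> 0" using n unfolding F_def is_norm_on_def by blast
    ultimately show ?thesis using that[of "F p0"] p0 by simp
  qed
  show ?thesis
  proof (intro exI[of _ c] conjI allI impI c(1))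
    fix \<psi> :: "complex^'d" and X :: "complex^'d^'d"
    assume a: "norm \<psi> = 1" "hermitian X" "KC \<psi> X"
    show "c * norm X \<le> Nm (meas_map Q X)"
    proof (cases "X = 0")
      case True then show ?thesis by (simp add: meas_zero Nm0)
    next
      case False
      define X' where "X' = (1 / norm X) *\<^sub>R X"
      have "(\<psi>, X') \<in> SS" using a False
        by (simp add: SS_def T_def X'_def herm_scaleR KC_scale)
      then have "c \<le> Nm (meas_map Q X')" using c F_def by auto
      also have "\<dots> = Nm (meas_map Q X) / norm X" by (simp add: X'_def meas_scaleR Nmh)
      finally show ?thesis using False by (simp add: field_simps)
    qed
  qed
qed

theorem theorem3:
  fixes Q :: "'l::finite \<Rightarrow> 'm::finite \<Rightarrow> complex ^ 'd::finite ^ 'd"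
    and NH :: "complex ^ 'd ^ 'd \<Rightarrow> real"
    and Nm :: "real ^ 'm ^ 'l \<Rightarrow> real"
  assumes "is_norm_on {X. hermitian X} NH"
    and "is_norm_on UNIV Nm"
    and "\<forall>i. povm (Q i)"
    and "determines_pure Q"
  shows "\<exists>C>0. \<forall>\<epsilon>>0. \<forall>\<sigma> f Y. pure_state \<sigma> \<longrightarrow> Nm f \<le> \<epsilon> \<longrightarrow>
           sdp_minimizer Q Nm (meas_map Q \<sigma> + f) \<epsilon> Y \<longrightarrow> NH (Y - \<sigma>) \<le> C * \<epsilon>"
proof -
  obtain K where K: "K \<ge> 0" "\<forall>X. hermitian X \<longrightarrow> NH X \<le> K * norm X" using NH_upper[OF assms(1)] by blast
  obtain c where c: "c > 0" "\<forall>\<psi> X. norm \<psi> = 1 \<longrightarrow> hermitian X \<longrightarrow> KC \<psi> X \<longrightarrow> c * norm X \<le> Nm (meas_map Q X)"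
    using stability_bound[OF assms(2,3,4)] by blast
  have tri: "Nm (x + y) \<le> Nm x + Nm y" for x y using assms(2) unfolding is_norm_on_def by blast
  show ?thesis
  proof (intro exI[of _ "2 * K / c + 1"] conjI allI impI)
    have "0 \<le> 2 * K / c" using K(1) c(1) by simp
    then show "2 * K / c + 1 > 0" by linarith
    fix \<epsilon> :: real and \<sigma> f Y
    assume e: "\<epsilon> > 0" and ps: "pure_state \<sigma>" and fe: "Nm f \<le> \<epsilon>"
      and mn: "sdp_minimizer Q Nm (meas_map Q \<sigma> + f) \<epsilon> Y"
    obtain w where w: "norm w = 1" "\<sigma> = outer w" using pure_ex[OF ps] by blast
    have hY: "hermitian Y" and pY: "psd Y" and fY: "Nm (meas_map Q Y - (meas_map Q \<sigma> + f)) \<le> \<epsilon>"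
      using mn unfolding sdp_minimizer_def sdp_feasible_def by auto
    define D where "D = Y - \<sigma>"
    have hD: "hermitian D" by (simp add: D_def herm_diff hY w herm_outer)
    have hww: "hip w w = 1" using w by (simp add: hip_self)
    have kD: "KC w D" unfolding KC_def
    proof
      fix u
      have o: "hip w (u - hip w u *s w) = 0" by (simp add: hip_diff_right hip_smult_right hww)
      have "0 \<le> Re (qf Y (u - hip w u *s w))" using pY by (simp add: psd_qf)
      then show "0 \<le> Re (qf D (u - hip w u *s w))"
        by (simp add: D_def qf_diff_mat w qf_outer o)
    qed
    have mD: "meas_map Q D = (meas_map Q Y - (meas_map Q \<sigma> + f)) + f"
      by (simp add: D_def meas_diff)
    have "Nm (meas_map Q D) \<le> 2 * \<epsilon>" using tri[of "meas_map Q Y - (meas_map Q \<sigma> + f)" f] fY fe mD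
      by simp
    then have "c * norm D \<le> 2 * \<epsilon>" using c(2) w(1) hD kD by (meson order_trans)
    then have nD: "norm D \<le> 2 * \<epsilon> / c" using c(1) by (simp add: field_simps)
    have "NH D \<le> K * norm D" using K hD by blast
    also have "\<dots> \<le> K * (2 * \<epsilon> / c)" using nD K(1) by (rule mult_left_mono)
    also have "\<dots> \<le> (2 * K / c + 1) * \<epsilon>" using e by (simp add: field_simps)
    finally show "NH (Y - \<sigma>) \<le> (2 * K / c + 1) * \<epsilon>" by (simp add: D_def)
  qed
qed

end
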